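(* Let $X$ and $Y$ be two arbitrary nonnegative random variables and assume that $\mathbb{P}(Y\le\delta)=0$ for some $\delta>0$. Then, for any $y$ that satisfies $\mathbb{P}(Y<y)>0$, $$\mathbb{P}(Y<y)\cdot\mathbb{E}\left[\frac XY\;\middle|\;Y<y\right]\le\frac1{\delta^2}\cdot\mathbb{P}(Y<y)+\int_{1/\delta^2}^\infty\mathbb{P}(X\ge\sqrt x)\,\mathrm{d}x.$$ *)

theory Defs
  imports "HOL-Probability.Probability"
begin

definition cond_nn_expectation :: "'a measure \<Rightarrow> 'a set \<Rightarrow> ('a \<Rightarrow> ennreal) \<Rightarrow> ennreal" where
  "cond_nn_expectation M A f = (\<integral>\<^sup>+ \<omega> \<in> A. f \<omega> \<partial>M) / emeasure M A"

end

theory Submission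
  imports Defs
begin

lemma real_bound:
  fixes X Y \<delta> :: real
  assumes "X \<ge> 0" "Y > \<delta>" "\<delta> > 0"
  shows "X / Y \<le> 1 / \<delta>\<^sup>2 + max 0 (X\<^sup>2 - 1 / \<delta>\<^sup>2)"
proof -
  have "X / Y \<le> X / \<delta>" using assms by (intro divide_left_mono) auto
  moreover have "X / \<delta> \<le> 1 / \<delta>\<^sup>2 + max 0 (X\<^sup>2 - 1 / \<delta>\<^sup>2)"
  proof (cases "X \<le> 1 / \<delta>")
    case True
    then have "X / \<delta> \<le> (1/\<delta>) / \<delta>" using assms by (intro divide_right_mono) auto
    then show ?thesis by (simp add: power2_eq_square)
  next
    case False
    then have "X / \<delta> = X * (1/\<delta>)" by simp
    also have "\<dots> \<le> X * X" using False assms by (intro mult_left_mono) auto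
    finally show ?thesis by (simp add: power2_eq_square)
  qed
  ultimately show ?thesis by linarith
qed

theorem lemma4:
  fixes M :: "'a measure" and X Y :: "'a \<Rightarrow> real" and \<delta> y :: real
  assumes "prob_space M"
    and "X \<in> borel_measurable M" and "Y \<in> borel_measurable M"
    and "\<And>\<omega>. \<omega> \<in> space M \<Longrightarrow> X \<omega> \<ge> 0"
    and "\<And>\<omega>. \<omega> \<in> space M \<Longrightarrow> Y \<omega> \<ge> 0"
    and "\<delta> > 0"
    and "measure M {\<omega> \<in> space M. Y \<omega> \<le> \<delta>} = 0"
    and "measure M {\<omega> \<in> space M. Y \<omega> < y} > 0"
  shows "emeasure M {\<omega> \<in> space M. Y \<omega> < y}
           * cond_nn_expectation M {\<omega> \<in> space M. Y \<omega> < y} (\<lambda>\<omega>. ennreal (X \<omega> / Y \<omega>))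
         \<le> ennreal (1 / \<delta>\<^sup>2) * emeasure M {\<omega> \<in> space M. Y \<omega> < y}
           + (\<integral>\<^sup>+ x \<in> {1 / \<delta>\<^sup>2..}. emeasure M {\<omega> \<in> space M. X \<omega> \<ge> sqrt x} \<partial>lborel)"
proof -
  interpret prob_space M by fact
  note [measurable] = assms(2,3)
  define c where "c = 1 / \<delta>\<^sup>2"
  have c0: "c > 0" using assms(6) by (simp add: c_def)
  define A where "A = {\<omega> \<in> space M. Y \<omega> < y}"
  have A[measurable]: "A \<in> sets M" unfolding A_def by measurable
  have A0: "emeasure M A \<noteq> 0" using assms(8) unfolding A_def
    by (simp add: emeasure_eq_measure)
  have At: "emeasure M A \<noteq> top" by (simp add: emeasure_eq_measure)
  have lhs: "emeasure M A * cond_nn_expectation M A (\<lambda>\<omega>. ennreal (X \<omega> / Y \<omega>))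
      = (\<integral>\<^sup>+ \<omega> \<in> A. ennreal (X \<omega> / Y \<omega>) \<partial>M)"
    unfolding cond_nn_expectation_def using A0 At
    by (simp add: ennreal_times_divide mult.commute[of "emeasure M A"] ennreal_mult_divide_eq)
  have null: "{\<omega> \<in> space M. Y \<omega> \<le> \<delta>} \<in> null_sets M"
    using assms(7) by (auto simp: null_sets_def emeasure_eq_measure)
  have AE: "AE \<omega> in M. Y \<omega> > \<delta>"
    by (rule AE_I'[OF null]) auto
  have step1: "(\<integral>\<^sup>+ \<omega> \<in> A. ennreal (X \<omega> / Y \<omega>) \<partial>M)
      \<le> (\<integral>\<^sup>+ \<omega>. (ennreal c * indicator A \<omega> + ennreal ((X \<omega>)\<^sup>2 - c)) \<partial>M)"
  proof (rule nn_integral_mono_AE)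
    show "AE \<omega> in M. ennreal (X \<omega> / Y \<omega>) * indicator A \<omega> \<le> ennreal c * indicator A \<omega> + ennreal ((X \<omega>)\<^sup>2 - c)"
      using AE
    proof (eventually_elim)
      case (elim \<omega>)
      show ?case
      proof (cases "\<omega> \<in> A")
        case True
        then have "\<omega> \<in> space M" unfolding A_def by auto
        then have "X \<omega> / Y \<omega> \<le> c + max 0 ((X \<omega>)\<^sup>2 - c)"
          unfolding c_def using real_bound[of "X \<omega>" \<delta> "Y \<omega>"] elim assms(4,6) by auto
        then have "ennreal (X \<omega> / Y \<omega>) \<le> ennreal (c + max 0 ((X \<omega>)\<^sup>2 - c))"
          by (rule ennreal_leI)
        also have "\<dots> = ennreal c + ennreal ((X \<omega>)\<^sup>2 - c)"
          using c0 by (simp add: ennreal_plus[symmetric] ennreal_max_0)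
        finally show ?thesis using True by simp
      qed simp
    qed
  qed
  have step2: "(\<integral>\<^sup>+ \<omega>. (ennreal c * indicator A \<omega> + ennreal ((X \<omega>)\<^sup>2 - c)) \<partial>M)
      = ennreal c * emeasure M A + (\<integral>\<^sup>+ \<omega>. ennreal ((X \<omega>)\<^sup>2 - c) \<partial>M)"
    by (subst nn_integral_add) (auto simp: nn_integral_cmult_indicator)
  interpret P: pair_sigma_finite M lborel
    by (intro pair_sigma_finite.intro) (auto simp: sigma_finite_measure_axioms lborel.sigma_finite_measure_axioms)
  define f where "f = (\<lambda>\<omega> x. indicator {p \<in> space (M \<Otimes>\<^sub>M lborel). c \<le> snd p \<and> snd p < (X (fst p))\<^sup>2} (\<omega>, x) :: ennreal)"
  have fm: "case_prod f \<in> borel_measurable (M \<Otimes>\<^sub>M lborel)"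
    unfolding f_def by measurable
  have inner1: "(\<integral>\<^sup>+ x. f \<omega> x \<partial>lborel) = ennreal ((X \<omega>)\<^sup>2 - c)" if "\<omega> \<in> space M" for \<omega>
  proof -
    have "(\<lambda>x. f \<omega> x) = indicator {c..<(X \<omega>)\<^sup>2}"
      using that by (auto simp: f_def space_pair_measure indicator_def fun_eq_iff)
    then show ?thesis
      by (cases "c \<le> (X \<omega>)\<^sup>2") (auto simp: ennreal_neg)
  qed
  have inner2: "(\<integral>\<^sup>+ \<omega>. f \<omega> x \<partial>M) \<le> emeasure M {\<omega> \<in> space M. X \<omega> \<ge> sqrt x} * indicator {c..} x" for x
  proof (cases "c \<le> x")
    case True
    have "(\<lambda>\<omega>. f \<omega> x) = indicator {\<omega> \<in> space M. x < (X \<omega>)\<^sup>2}"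
      using True by (auto simp: f_def space_pair_measure indicator_def fun_eq_iff)
    then have "(\<integral>\<^sup>+ \<omega>. f \<omega> x \<partial>M) = emeasure M {\<omega> \<in> space M. x < (X \<omega>)\<^sup>2}"
      by simp
    also have "\<dots> \<le> emeasure M {\<omega> \<in> space M. X \<omega> \<ge> sqrt x}"
    proof (rule emeasure_mono)
      show "{\<omega> \<in> space M. x < (X \<omega>)\<^sup>2} \<subseteq> {\<omega> \<in> space M. sqrt x \<le> X \<omega>}"
      proof safe
        fix \<omega> assume "\<omega> \<in> space M" "x < (X \<omega>)\<^sup>2"
        then have "sqrt x \<le> sqrt ((X \<omega>)\<^sup>2)" by (intro real_sqrt_le_mono) auto
        then show "sqrt x \<le> X \<omega>" using assms(4) \<open>\<omega> \<in> space M\<close> by simp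
      qed
    qed measurable
    finally show ?thesis using True by simp
  next
    case False
    then have "(\<lambda>\<omega>. f \<omega> x) = (\<lambda>_. 0)"
      by (auto simp: f_def indicator_def fun_eq_iff)
    then show ?thesis by simp
  qed
  have "(\<integral>\<^sup>+ \<omega>. ennreal ((X \<omega>)\<^sup>2 - c) \<partial>M) = (\<integral>\<^sup>+ \<omega>. (\<integral>\<^sup>+ x. f \<omega> x \<partial>lborel) \<partial>M)"
    by (rule nn_integral_cong) (simp add: inner1)
  also have "\<dots> = (\<integral>\<^sup>+ x. (\<integral>\<^sup>+ \<omega>. f \<omega> x \<partial>M) \<partial>lborel)"
    by (rule P.Fubini'[OF fm, symmetric])
  also have "\<dots> \<le> (\<integral>\<^sup>+ x. emeasure M {\<omega> \<in> space M. X \<omega> \<ge> sqrt x} * indicator {c..} x \<partial>lborel)"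
    by (intro nn_integral_mono inner2)
  finally have step3: "(\<integral>\<^sup>+ \<omega>. ennreal ((X \<omega>)\<^sup>2 - c) \<partial>M) \<le> (\<integral>\<^sup>+ x \<in> {c..}. emeasure M {\<omega> \<in> space M. X \<omega> \<ge> sqrt x} \<partial>lborel)" .
  have "emeasure M A * cond_nn_expectation M A (\<lambda>\<omega>. ennreal (X \<omega> / Y \<omega>))
      \<le> ennreal c * emeasure M A + (\<integral>\<^sup>+ x \<in> {c..}. emeasure M {\<omega> \<in> space M. X \<omega> \<ge> sqrt x} \<partial>lborel)"
    unfolding lhs
  proof -
    note step1
    also note step2
    also have "ennreal c * emeasure M A + (\<integral>\<^sup>+ \<omega>. ennreal ((X \<omega>)\<^sup>2 - c) \<partial>M)
       \<le> ennreal c * emeasure M A + (\<integral>\<^sup>+ x \<in> {c..}. emeasure M {\<omega> \<in> space M. X \<omega> \<ge> sqrt x} \<partial>lborel)"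
      by (rule add_left_mono[OF step3])
    finally show "(\<integral>\<^sup>+ \<omega> \<in> A. ennreal (X \<omega> / Y \<omega>) \<partial>M) \<le> ennreal c * emeasure M A + (\<integral>\<^sup>+ x \<in> {c..}. emeasure M {\<omega> \<in> space M. X \<omega> \<ge> sqrt x} \<partial>lborel)" .
  qed
  then show ?thesis unfolding A_def c_def .
qed

end
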